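(* Let $X$ be an $\mathrm{OA}(N,k,2,t_1)$ and $Y$ an $\mathrm{OA}(N,k,2,t_2)$, both with symbols from $\{-1,1\}$, with strengths $t_1\ge1$ and $t_2\ge1$. Then $X$ and $Y$ are OD-equivalent if and only if the multiset of rows of $X$ equals the multiset of rows of $g(Y)$ for some $g\in G(k)^{\rm OD}$.
   Context: An $\mathrm{OA}(N,k,s,t)$ with $t\in\{0,\dots,k\}$ is an $N\times k$ array over an $s$-element symbol set such that in every $N\times t$ subarray each of the $s^t$ possible $t$-tuples appears exactly $N/s^t$ times as a row. Two $N\times k$ arrays $Y_1,Y_2$ over $\{-1,1\}$ are Hadamard equivalent if $Y_2=P_1D_1Y_1D_2P_2$ for permutation matrices $P_1,P_2$ and diagonal $\pm1$ matrices $D_1,D_2$ (i.e. obtained by signed permutations of rows and columns). $X_1,X_2$ are OD-equivalent if $[\mathbf{1},X_1]$ and $[\mathbf{1},X_2]$ are Hadamard equivalent. $G(k)^{\rm OD}$ is the group of permutations of $\{-1,1\}^k$ generated by coordinate permutations, sign changes of single coordinates, and $R_i(z_1,\dots,z_k)=(z_1z_i,\dots,z_{i-1}z_i,z_i,z_{i+1}z_i,\dots,z_kz_i)$ for $i=1,\dots,k$; it acts on arrays row by row. *)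

theory Defs
  imports "HOL-Library.Multiset" "HOL-Combinatorics.Permutations"
begin

text \<open>Arrays over the symbol set {-1,1}: an N x k array is a list of N rows,
  each row an int list of length k. Indices are 0-based.\<close>

definition pm1_array :: "nat \<Rightarrow> nat \<Rightarrow> int list list \<Rightarrow> bool" where
  "pm1_array N k X \<longleftrightarrow> length X = N \<and>
     (\<forall>r\<in>set X. length r = k \<and> set r \<subseteq> {-1, 1})"

definition is_OA :: "nat \<Rightarrow> nat \<Rightarrow> nat \<Rightarrow> int list list \<Rightarrow> bool" where
  "is_OA N k t X \<longleftrightarrow> pm1_array N k X \<and> t \<le> k \<and>
     (\<forall>cs v. distinct cs \<and> length cs = t \<and> set cs \<subseteq> {..<k} \<and>
             length v = t \<and> set v \<subseteq> {-1, 1} \<longrightarrow>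
        card {i. i < N \<and> map (\<lambda>c. X ! i ! c) cs = v} * 2 ^ t = N)"

definition hadamard_equiv :: "nat \<Rightarrow> nat \<Rightarrow> int list list \<Rightarrow> int list list \<Rightarrow> bool" where
  "hadamard_equiv N k Y1 Y2 \<longleftrightarrow>
     (\<exists>\<sigma> \<tau> (a :: nat \<Rightarrow> int) (b :: nat \<Rightarrow> int).
        \<sigma> permutes {..<N} \<and> \<tau> permutes {..<k} \<and>
        (\<forall>i<N. a i \<in> {-1, 1}) \<and> (\<forall>j<k. b j \<in> {-1, 1}) \<and>
        (\<forall>i<N. \<forall>j<k. Y2 ! i ! j = a (\<sigma> i) * Y1 ! (\<sigma> i) ! (\<tau> j) * b (\<tau> j)))"

definition OD_equiv :: "nat \<Rightarrow> nat \<Rightarrow> int list list \<Rightarrow> int list list \<Rightarrow> bool" where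
  "OD_equiv N k X1 X2 \<longleftrightarrow>
     hadamard_equiv N (Suc k) (map (\<lambda>r. 1 # r) X1) (map (\<lambda>r. 1 # r) X2)"

definition coord_perm :: "nat \<Rightarrow> (nat \<Rightarrow> nat) \<Rightarrow> int list \<Rightarrow> int list" where
  "coord_perm k \<pi> z = map (\<lambda>j. z ! \<pi> j) [0..<k]"

definition sign_change :: "nat \<Rightarrow> int list \<Rightarrow> int list" where
  "sign_change i z = z[i := - (z ! i)]"

definition R_map :: "nat \<Rightarrow> nat \<Rightarrow> int list \<Rightarrow> int list" where
  "R_map k i z = map (\<lambda>j. if j = i then z ! i else z ! j * z ! i) [0..<k]"

text \<open>All generators are bijections of the finite
  set {-1,1}^k whose inverses are again generators, so the generated monoid
  (closure of id under composition with generators) is the generated group.\<close>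

inductive_set G_OD :: "nat \<Rightarrow> (int list \<Rightarrow> int list) set" for k :: nat where
  G_id: "id \<in> G_OD k"
| G_perm: "g \<in> G_OD k \<Longrightarrow> \<pi> permutes {..<k} \<Longrightarrow> coord_perm k \<pi> \<circ> g \<in> G_OD k"
| G_sign: "g \<in> G_OD k \<Longrightarrow> i < k \<Longrightarrow> sign_change i \<circ> g \<in> G_OD k"
| G_R: "g \<in> G_OD k \<Longrightarrow> i < k \<Longrightarrow> R_map k i \<circ> g \<in> G_OD k"

end

theory Submission
  imports Defs
begin


lemma G_comp: "g \<in> G_OD k \<Longrightarrow> h \<in> G_OD k \<Longrightarrow> g \<circ> h \<in> G_OD k"
  by (induction g rule: G_OD.induct)
     (auto simp: comp_assoc intro: G_OD.intros)

definition pm1row :: "nat \<Rightarrow> int list \<Rightarrow> bool" where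
  "pm1row k z \<longleftrightarrow> length z = k \<and> set z \<subseteq> {-1,1}"

lemma pm1row_nth: "pm1row k z \<Longrightarrow> j < k \<Longrightarrow> z ! j = -1 \<or> z ! j = 1"
  unfolding pm1row_def using nth_mem by fastforce

lemma map_upt_subset: "(\<And>j. j<k \<Longrightarrow> f j \<in> A) \<Longrightarrow> set (map f [0..<k]) \<subseteq> A" by auto

lemma pm1row_gen_perm: "pm1row k z \<Longrightarrow> \<pi> permutes {..<k} \<Longrightarrow> pm1row k (coord_perm k \<pi> z)"
proof -
  assume z: "pm1row k z" and p: "\<pi> permutes {..<k}"
  have "z ! \<pi> j \<in> {-1,1}" if "j < k" for j
  proof -
    have "\<pi> j < k" using permutes_in_image[OF p] that by simp
    then show ?thesis using z nth_mem unfolding pm1row_def by blast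
  qed
  then show ?thesis unfolding pm1row_def coord_perm_def by (simp only: map_upt_subset length_map length_upt) simp
qed

lemma pm1row_gen_sign: "pm1row k z \<Longrightarrow> i < k \<Longrightarrow> pm1row k (sign_change i z)"
proof -
  assume z: "pm1row k z" and i: "i < k"
  have "- z ! i \<in> {-1,1}" using pm1row_nth[OF z i] by auto
  moreover have "set z \<subseteq> {-1,1}" using z unfolding pm1row_def by simp
  ultimately have "set (z[i := - z ! i]) \<subseteq> {-1,1}"
    using set_update_subset_insert[of z i "- z ! i"] by blast
  then show ?thesis using z unfolding pm1row_def sign_change_def by simp
qed

lemma pm1row_gen_R: "pm1row k z \<Longrightarrow> i < k \<Longrightarrow> pm1row k (R_map k i z)"
proof -
  assume z: "pm1row k z" and i: "i < k"
  have "(if j = i then z ! i else z ! j * z ! i) \<in> {-1,1}" if "j < k" for j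
    using pm1row_nth[OF z i] pm1row_nth[OF z that] by auto
  then show ?thesis unfolding pm1row_def R_map_def by (simp only: map_upt_subset length_map length_upt) simp
qed

lemma G_pm1: "g \<in> G_OD k \<Longrightarrow> pm1row k z \<Longrightarrow> pm1row k (g z)"
  by (induction g rule: G_OD.induct)
     (auto intro: pm1row_gen_perm pm1row_gen_sign pm1row_gen_R)


lemma pm_sq: "(x::int) \<in> {-1,1} \<Longrightarrow> x * x = 1" by auto
lemma pm_mult: "(x::int) \<in> {-1,1} \<Longrightarrow> y \<in> {-1,1} \<Longrightarrow> x * y \<in> {-1,1}" by auto

lemma had_sym:
  assumes "hadamard_equiv N K Y1 Y2" shows "hadamard_equiv N K Y2 Y1"
proof -
  obtain \<sigma> \<tau> a b where s: "\<sigma> permutes {..<N}" and t: "\<tau> permutes {..<K}"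
    and a: "\<forall>i<N. a i \<in> {-1, 1}" and b: "\<forall>j<K. b j \<in> {-1, 1}"
    and e: "\<forall>i<N. \<forall>j<K. Y2 ! i ! j = a (\<sigma> i) * Y1 ! (\<sigma> i) ! (\<tau> j) * b (\<tau> j)"
    using assms unfolding hadamard_equiv_def by blast
  show ?thesis unfolding hadamard_equiv_def
  proof (intro exI conjI allI impI)
    show "inv \<sigma> permutes {..<N}" using permutes_inv[OF s] .
    show "inv \<tau> permutes {..<K}" using permutes_inv[OF t] .
    show "(a \<circ> \<sigma>) i \<in> {-1,1}" if "i < N" for i
      using a that permutes_in_image[OF s] by auto
    show "(b \<circ> \<tau>) j \<in> {-1,1}" if "j < K" for j
      using b that permutes_in_image[OF t] by auto
    fix i j assume i: "i < N" and j: "j < K"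
    have i': "inv \<sigma> i < N" using permutes_in_image[OF permutes_inv[OF s]] i by auto
    have j': "inv \<tau> j < K" using permutes_in_image[OF permutes_inv[OF t]] j by auto
    have "Y2 ! inv \<sigma> i ! inv \<tau> j = a i * Y1 ! i ! j * b j"
      using e i' j' permutes_inverses[OF s] permutes_inverses[OF t] by auto
    moreover have "a i * a i = 1" "b j * b j = 1" using a b i j by (auto intro: pm_sq)
    ultimately show "Y1 ! i ! j = (a \<circ> \<sigma>) (inv \<sigma> i) * Y2 ! inv \<sigma> i ! inv \<tau> j * (b \<circ> \<tau>) (inv \<tau> j)"
      using permutes_inverses[OF s] permutes_inverses[OF t]
      by (simp add: algebra_simps)
  qed
qed

lemma had_trans:
  assumes "hadamard_equiv N K Y1 Y2" "hadamard_equiv N K Y2 Y3" shows "hadamard_equiv N K Y1 Y3"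
proof -
  obtain \<sigma> \<tau> a b where s: "\<sigma> permutes {..<N}" and t: "\<tau> permutes {..<K}"
    and a: "\<forall>i<N. a i \<in> {-1, 1}" and b: "\<forall>j<K. b j \<in> {-1, 1}"
    and e: "\<forall>i<N. \<forall>j<K. Y2 ! i ! j = a (\<sigma> i) * Y1 ! (\<sigma> i) ! (\<tau> j) * b (\<tau> j)"
    using assms(1) unfolding hadamard_equiv_def by blast
  obtain \<sigma>' \<tau>' a' b' where s': "\<sigma>' permutes {..<N}" and t': "\<tau>' permutes {..<K}"
    and a': "\<forall>i<N. a' i \<in> {-1, 1}" and b': "\<forall>j<K. b' j \<in> {-1, 1}"
    and e': "\<forall>i<N. \<forall>j<K. Y3 ! i ! j = a' (\<sigma>' i) * Y2 ! (\<sigma>' i) ! (\<tau>' j) * b' (\<tau>' j)"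
    using assms(2) unfolding hadamard_equiv_def by blast
  show ?thesis unfolding hadamard_equiv_def
  proof (intro exI conjI allI impI)
    show "\<sigma> \<circ> \<sigma>' permutes {..<N}" using permutes_compose[OF s' s] .
    show "\<tau> \<circ> \<tau>' permutes {..<K}" using permutes_compose[OF t' t] .
    show "(\<lambda>x. a' (inv \<sigma> x) * a x) i \<in> {-1,1}" if "i < N" for i
    proof -
      have "a' (inv \<sigma> i) \<in> {-1,1}" "a i \<in> {-1,1}"
        using a a' that permutes_in_image[OF permutes_inv[OF s]] by auto
      then show ?thesis by (simp only: pm_mult)
    qed
    show "(\<lambda>x. b x * b' (inv \<tau> x)) j \<in> {-1,1}" if "j < K" for j
    proof -
      have "b' (inv \<tau> j) \<in> {-1,1}" "b j \<in> {-1,1}"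
        using b b' that permutes_in_image[OF permutes_inv[OF t]] by auto
      then show ?thesis by (simp only: pm_mult)
    qed
    fix i j assume i: "i < N" and j: "j < K"
    have i': "\<sigma>' i < N" using permutes_in_image[OF s'] i by auto
    have j': "\<tau>' j < K" using permutes_in_image[OF t'] j by auto
    show "Y3 ! i ! j = (\<lambda>x. a' (inv \<sigma> x) * a x) ((\<sigma> \<circ> \<sigma>') i) * Y1 ! (\<sigma> \<circ> \<sigma>') i ! (\<tau> \<circ> \<tau>') j *
          (\<lambda>x. b x * b' (inv \<tau> x)) ((\<tau> \<circ> \<tau>') j)"
      using e' i j e i' j' permutes_inverses[OF s] permutes_inverses[OF t]
      by (simp add: algebra_simps)
  qed
qed

lemma OD_sym: "OD_equiv N k X Y \<Longrightarrow> OD_equiv N k Y X"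
  unfolding OD_equiv_def using had_sym by blast

lemma OD_trans: "OD_equiv N k X Y \<Longrightarrow> OD_equiv N k Y Z \<Longrightarrow> OD_equiv N k X Z"
  unfolding OD_equiv_def using had_trans by blast

lemma OD_mset:
  assumes "mset X = mset Z" "length Z = N"
  shows "OD_equiv N k Z X"
proof -
  obtain p where p: "p permutes {..<length Z}" "permute_list p Z = X"
    using mset_eq_permutation[OF assms(1)] by blast
  show ?thesis unfolding OD_equiv_def hadamard_equiv_def
  proof (intro exI conjI allI impI)
    show "p permutes {..<N}" using p assms by simp
    show "id permutes {..<Suc k}" by (rule permutes_id)
    show "(\<lambda>_::nat. 1::int) i \<in> {-1,1}" for i by simp
    show "(\<lambda>_::nat. 1::int) i \<in> {-1,1}" for i by simp
    fix i j assume i: "i < N" and j: "j < Suc k"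
    have pi: "p i < N" using permutes_in_image[OF p(1)] i assms by auto
    have "X ! i = Z ! p i" using p permute_list_nth[of p Z i] i assms by auto
    moreover have "length X = N" using p assms by auto
    ultimately have "map ((#) 1) X ! i = map ((#) 1) Z ! p i"
      using i pi assms by (simp only: nth_map)
    then show "map ((#) 1) X ! i ! j = 1 * map ((#) 1) Z ! p i ! id j * 1"
      by simp
  qed
qed



lemma perm_fin: "finite A \<Longrightarrow> inj_on f A \<Longrightarrow> f ` A \<subseteq> A \<Longrightarrow> (\<And>x. x \<notin> A \<Longrightarrow> f x = x) \<Longrightarrow> f permutes A"
  by (metis bij_imp_permutes bij_betw_def endo_inj_surj)

lemma permutes_lift:
  assumes p: "\<pi> permutes {..<k}"
  shows "(\<lambda>j. case j of 0 \<Rightarrow> 0 | Suc m \<Rightarrow> Suc (\<pi> m)) permutes {..<Suc k}"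
proof (rule perm_fin)
  have inj: "inj \<pi>" using permutes_inj[OF p] .
  show "inj_on (\<lambda>j. case j of 0 \<Rightarrow> 0 | Suc m \<Rightarrow> Suc (\<pi> m)) {..<Suc k}"
    unfolding inj_on_def
  proof (intro ballI impI)
    fix x y assume e: "(case x of 0 \<Rightarrow> 0 | Suc m \<Rightarrow> Suc (\<pi> m)) = (case y of 0 \<Rightarrow> 0 | Suc m \<Rightarrow> Suc (\<pi> m))"
    show "x = y"
    proof (cases x)
      case 0
      then show ?thesis using e by (cases y) simp_all
    next
      case (Suc x')
      then show ?thesis using e injD[OF inj] by (cases y) simp_all
    qed
  qed
  show "(\<lambda>j. case j of 0 \<Rightarrow> 0 | Suc m \<Rightarrow> Suc (\<pi> m)) ` {..<Suc k} \<subseteq> {..<Suc k}"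
  proof
    fix y assume "y \<in> (\<lambda>j. case j of 0 \<Rightarrow> 0 | Suc m \<Rightarrow> Suc (\<pi> m)) ` {..<Suc k}"
    then obtain x where x: "x < Suc k" "y = (case x of 0 \<Rightarrow> 0 | Suc m \<Rightarrow> Suc (\<pi> m))" by auto
    show "y \<in> {..<Suc k}"
    proof (cases x)
      case 0 then show ?thesis using x by simp
    next
      case (Suc x')
      then have "\<pi> x' < k" using x permutes_in_image[OF p, of x'] by simp
      then show ?thesis using x Suc by simp
    qed
  qed
  show "(case x of 0 \<Rightarrow> 0 | Suc m \<Rightarrow> Suc (\<pi> m)) = x" if "x \<notin> {..<Suc k}" for x
  proof (cases x)
    case 0 then show ?thesis by simp
  next
    case (Suc x')
    then have "\<pi> x' = x'" using that permutes_not_in[OF p, of x'] by simp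
    then show ?thesis using Suc by simp
  qed
qed simp

lemma permutes_lower:
  assumes p: "p permutes {..<Suc k}" and p0: "p 0 = 0"
  shows "(\<lambda>j. p (Suc j) - 1) permutes {..<k}"
proof (rule perm_fin)
  have inj: "inj p" using permutes_inj[OF p] .
  have nz: "p (Suc j) \<noteq> 0" for j using inj p0 by (metis injD nat.distinct(1))
  show "inj_on (\<lambda>j. p (Suc j) - 1) {..<k}"
    unfolding inj_on_def
  proof (intro ballI impI)
    fix x y assume "p (Suc x) - 1 = p (Suc y) - 1"
    then have "p (Suc x) = p (Suc y)" using nz[of x] nz[of y] by linarith
    then show "x = y" using inj by (auto dest: injD)
  qed
  show "(\<lambda>j. p (Suc j) - 1) ` {..<k} \<subseteq> {..<k}"
  proof
    fix y assume "y \<in> (\<lambda>j. p (Suc j) - 1) ` {..<k}"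
    then obtain x where x: "x < k" "y = p (Suc x) - 1" by auto
    have "p (Suc x) < Suc k" using permutes_in_image[OF p, of "Suc x"] x by simp
    then show "y \<in> {..<k}" using x nz[of x] by simp
  qed
  show "p (Suc x) - 1 = x" if "x \<notin> {..<k}" for x
    using that permutes_not_in[OF p] by auto
qed simp

lemma flip_G:
  assumes "finite M" "M \<subseteq> {..<k}"
  shows "\<exists>g\<in>G_OD k. \<forall>z. length z = k \<longrightarrow> g z = map (\<lambda>m. if m \<in> M then - z ! m else z ! m) [0..<k]"
  using assms
proof (induction M rule: finite_induct)
  case empty
  show ?case
  proof (intro bexI allI impI)
    fix z :: "int list" assume "length z = k"
    then show "id z = map (\<lambda>m. if m \<in> {} then - z ! m else z ! m) [0..<k]"
      by (simp add: nth_equalityI)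
  qed (rule G_OD.G_id)
next
  case (insert m M)
  then obtain g where g: "g \<in> G_OD k"
    and ge: "\<forall>z. length z = k \<longrightarrow> g z = map (\<lambda>m. if m \<in> M then - z ! m else z ! m) [0..<k]"
    by auto
  have mk: "m < k" using insert by auto
  show ?case
  proof (intro bexI allI impI)
    show "sign_change m \<circ> g \<in> G_OD k" using G_OD.G_sign[OF g mk] .
    fix z :: "int list" assume z: "length z = k"
    show "(sign_change m \<circ> g) z = map (\<lambda>ma. if ma \<in> insert m M then - z ! ma else z ! ma) [0..<k]"
    proof (rule nth_equalityI)
      have lg: "length (g z) = k" using ge z by simp
      then show "length ((sign_change m \<circ> g) z) = length (map (\<lambda>ma. if ma \<in> insert m M then - z ! ma else z ! ma) [0..<k])"
        unfolding sign_change_def by simp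
      fix j assume "j < length ((sign_change m \<circ> g) z)"
      then have j: "j < k" using lg unfolding sign_change_def by simp
      have gj: "g z ! j = (if j \<in> M then - z ! j else z ! j)" using ge z j by simp
      have gm: "g z ! m = (if m \<in> M then - z ! m else z ! m)" using ge z mk by simp
      show "(sign_change m \<circ> g) z ! j = map (\<lambda>ma. if ma \<in> insert m M then - z ! ma else z ! ma) [0..<k] ! j"
        unfolding sign_change_def comp_def
        using j lg gj gm insert(2) by (cases "j = m") simp_all
    qed
  qed
qed

lemma signed_perm_G:
  assumes p: "\<pi> permutes {..<k}" and s: "\<forall>j<k. s j \<in> {-1,1::int}"
  shows "\<exists>g\<in>G_OD k. \<forall>z. length z = k \<longrightarrow> g z = map (\<lambda>j. s j * z ! (\<pi> j)) [0..<k]"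
proof -
  define M where "M = {m. m < k \<and> s (inv \<pi> m) = -1}"
  have "finite M" "M \<subseteq> {..<k}" unfolding M_def by auto
  then obtain g where g: "g \<in> G_OD k"
    and ge: "\<forall>z. length z = k \<longrightarrow> g z = map (\<lambda>m. if m \<in> M then - z ! m else z ! m) [0..<k]"
    using flip_G by blast
  show ?thesis
  proof (intro bexI allI impI)
    show "coord_perm k \<pi> \<circ> g \<in> G_OD k" using G_OD.G_perm[OF g p] .
    fix z :: "int list" assume z: "length z = k"
    show "(coord_perm k \<pi> \<circ> g) z = map (\<lambda>j. s j * z ! (\<pi> j)) [0..<k]"
    proof (rule nth_equalityI)
      show "length ((coord_perm k \<pi> \<circ> g) z) = length (map (\<lambda>j. s j * z ! (\<pi> j)) [0..<k])"
        by (simp add: coord_perm_def)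
      fix j assume "j < length ((coord_perm k \<pi> \<circ> g) z)"
      then have j: "j < k" by (simp add: coord_perm_def)
      have pj: "\<pi> j < k" using permutes_in_image[OF p] j by simp
      have "(\<pi> j \<in> M) = (s j = -1)" unfolding M_def using pj permutes_inverses[OF p] by simp
      moreover have "s j = -1 \<or> s j = 1" using s j by auto
      ultimately show "(coord_perm k \<pi> \<circ> g) z ! j = map (\<lambda>j. s j * z ! (\<pi> j)) [0..<k] ! j"
        using ge z j pj unfolding coord_perm_def by auto
    qed
  qed
qed

lemma KEY:
  assumes z: "length z = k" and c: "c < k" and zc: "z ! c \<in> {-1,1}" and pk: "p < Suc k"
  shows "(1 # z) ! Suc c * (1 # z) ! p = (1 # R_map k c z) ! (Transposition.transpose 0 (Suc c) p)"
proof (cases p)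
  case 0
  then show ?thesis using c by (simp add: R_map_def)
next
  case (Suc m)
  show ?thesis
  proof (cases "m = c")
    case True
    then show ?thesis using Suc zc by auto
  next
    case False
    then show ?thesis using Suc pk by (simp add: R_map_def transpose_apply_other mult.commute)
  qed
qed



lemma pm1_cons_nth: "pm1row k z \<Longrightarrow> p < Suc k \<Longrightarrow> (1 # z) ! p \<in> {-1,1::int}"
  by (cases p) (auto dest: pm1row_nth)

lemma pm_solve: "(a::int) \<in> {-1,1} \<Longrightarrow> x \<in> {-1,1} \<Longrightarrow> bb \<in> {-1,1} \<Longrightarrow> 1 = a * x * bb \<Longrightarrow> a = x * bb"
  by auto

lemma OD_rowwise:
  assumes lz: "length Z = N" and rz: "\<forall>r\<in>set Z. pm1row k r"
    and t: "\<tau> permutes {..<Suc k}" and b: "\<forall>j<Suc k. b j \<in> {-1,1::int}"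
    and al: "\<And>z. pm1row k z \<Longrightarrow> \<alpha> z \<in> {-1,1::int}"
    and row: "\<And>z j. pm1row k z \<Longrightarrow> j < Suc k \<Longrightarrow> (1 # f z) ! j = \<alpha> z * (1 # z) ! (\<tau> j) * b (\<tau> j)"
  shows "OD_equiv N k Z (map f Z)"
  unfolding OD_equiv_def hadamard_equiv_def
proof (intro exI conjI allI impI)
  show "id permutes {..<N}" by (rule permutes_id)
  show "\<tau> permutes {..<Suc k}" by (rule t)
  show "(\<lambda>i. \<alpha> (Z ! i)) i \<in> {-1,1}" if "i < N" for i
    using al rz lz that nth_mem by blast
  show "b j \<in> {-1,1}" if "j < Suc k" for j using b that by blast
  fix i j assume i: "i < N" and j: "j < Suc k"
  have z: "pm1row k (Z ! i)" using rz lz i nth_mem by blast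
  have "map ((#) 1) (map f Z) ! i = 1 # f (Z ! i)" using i lz by simp
  moreover have "map ((#) 1) Z ! id i = 1 # Z ! i" using i lz by simp
  ultimately show "map ((#) 1) (map f Z) ! i ! j = (\<lambda>i. \<alpha> (Z ! i)) (id i) * map ((#) 1) Z ! id i ! \<tau> j * b (\<tau> j)"
    using row[OF z j] by simp
qed

lemma OD_gen_perm:
  assumes "length Z = N" "\<forall>r\<in>set Z. pm1row k r" and p: "\<pi> permutes {..<k}"
  shows "OD_equiv N k Z (map (coord_perm k \<pi>) Z)"
proof (rule OD_rowwise[OF assms(1,2) permutes_lift[OF p], where b = "\<lambda>_. 1" and \<alpha> = "\<lambda>_. 1"])
  fix z :: "int list" and j assume z: "pm1row k z" and j: "j < Suc k"
  show "(1 # coord_perm k \<pi> z) ! j = 1 * (1 # z) ! (case j of 0 \<Rightarrow> 0 | Suc m \<Rightarrow> Suc (\<pi> m)) * 1"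
    using j by (cases j) (simp_all add: coord_perm_def)
qed simp_all

lemma OD_gen_sign:
  assumes "length Z = N" "\<forall>r\<in>set Z. pm1row k r" and c: "c < k"
  shows "OD_equiv N k Z (map (sign_change c) Z)"
proof (rule OD_rowwise[OF assms(1,2) permutes_id, where b = "\<lambda>j. if j = Suc c then -1 else 1" and \<alpha> = "\<lambda>_. 1"])
  fix z :: "int list" and j assume z: "pm1row k z" and j: "j < Suc k"
  have lz: "length z = k" using z unfolding pm1row_def by simp
  show "(1 # sign_change c z) ! j = 1 * (1 # z) ! id j * (if id j = Suc c then -1 else 1)"
  proof (cases j)
    case 0 then show ?thesis by simp
  next
    case (Suc m)
    then have "m < k" using j by simp
    then show ?thesis using Suc lz c unfolding sign_change_def by (cases "m = c") simp_all
  qed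
qed simp_all

lemma OD_gen_R:
  assumes "length Z = N" "\<forall>r\<in>set Z. pm1row k r" and c: "c < k"
  shows "OD_equiv N k Z (map (R_map k c) Z)"
proof (rule OD_rowwise[OF assms(1,2), where \<tau> = "Transposition.transpose 0 (Suc c)" and b = "\<lambda>_. 1" and \<alpha> = "\<lambda>z. z ! c"])
  show "Transposition.transpose 0 (Suc c) permutes {..<Suc k}"
    using c by (intro permutes_swap_id) auto
  show "z ! c \<in> {-1,1}" if "pm1row k z" for z using pm1row_nth[OF that c] by auto
  fix z :: "int list" and j assume z: "pm1row k z" and j: "j < Suc k"
  have lz: "length z = k" using z unfolding pm1row_def by simp
  have zc: "z ! c \<in> {-1,1}" using pm1row_nth[OF z c] by auto
  have tj: "Transposition.transpose 0 (Suc c) j < Suc k"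
    using j c by (auto simp: transpose_def)
  have "(1 # z) ! Suc c * (1 # z) ! (Transposition.transpose 0 (Suc c) j) =
        (1 # R_map k c z) ! (Transposition.transpose 0 (Suc c) (Transposition.transpose 0 (Suc c) j))"
    by (rule KEY[OF lz c zc tj])
  then show "(1 # R_map k c z) ! j = z ! c * (1 # z) ! Transposition.transpose 0 (Suc c) j * 1"
    by simp
qed simp

lemma OD_G:
  assumes g: "g \<in> G_OD k"
  shows "length Z = N \<Longrightarrow> \<forall>r\<in>set Z. pm1row k r \<Longrightarrow> OD_equiv N k Z (map g Z)"
  using g
proof (induction g rule: G_OD.induct)
  case G_id
  then show ?case using OD_mset[of Z Z N k] by simp
next
  case (G_perm g \<pi>)
  have r: "\<forall>r\<in>set (map g Z). pm1row k r" using G_pm1[OF G_perm.hyps(1)] G_perm.prems by auto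
  have "OD_equiv N k (map g Z) (map (coord_perm k \<pi>) (map g Z))"
    using OD_gen_perm[OF _ r G_perm.hyps(2)] G_perm.prems by simp
  moreover have "OD_equiv N k Z (map g Z)" using G_perm by simp
  ultimately show ?case using OD_trans[of N k Z "map g Z"] by (simp add: map_map comp_def)
next
  case (G_sign g i)
  have r: "\<forall>r\<in>set (map g Z). pm1row k r" using G_pm1[OF G_sign.hyps(1)] G_sign.prems by auto
  have "OD_equiv N k (map g Z) (map (sign_change i) (map g Z))"
    using OD_gen_sign[OF _ r G_sign.hyps(2)] G_sign.prems by simp
  moreover have "OD_equiv N k Z (map g Z)" using G_sign by simp
  ultimately show ?case using OD_trans[of N k Z "map g Z"] by (simp add: map_map comp_def)
next
  case (G_R g i)
  have r: "\<forall>r\<in>set (map g Z). pm1row k r" using G_pm1[OF G_R.hyps(1)] G_R.prems by auto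
  have "OD_equiv N k (map g Z) (map (R_map k i) (map g Z))"
    using OD_gen_R[OF _ r G_R.hyps(2)] G_R.prems by simp
  moreover have "OD_equiv N k Z (map g Z)" using G_R by simp
  ultimately show ?case using OD_trans[of N k Z "map g Z"] by (simp add: map_map comp_def)
qed



lemma dirA:
  assumes lx: "length X = N" and ly: "length Y = N"
    and rx: "\<forall>r\<in>set X. pm1row k r" and ry: "\<forall>r\<in>set Y. pm1row k r"
    and od: "OD_equiv N k X Y"
  shows "\<exists>g\<in>G_OD k. mset Y = mset (map g X)"
proof -
  obtain \<sigma> \<tau> a b where s: "\<sigma> permutes {..<N}" and t: "\<tau> permutes {..<Suc k}"
    and a: "\<forall>i<N. a i \<in> {-1, 1::int}" and b: "\<forall>j<Suc k. b j \<in> {-1, 1::int}"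
    and e: "\<forall>i<N. \<forall>j<Suc k. map ((#) 1) Y ! i ! j = a (\<sigma> i) * map ((#) 1) X ! (\<sigma> i) ! (\<tau> j) * b (\<tau> j)"
    using od unfolding OD_equiv_def hadamard_equiv_def by blast
  define c0 where "c0 = \<tau> 0"
  have c0k: "c0 < Suc k" unfolding c0_def using permutes_in_image[OF t, of 0] by simp
  define \<rho> where "\<rho> = Transposition.transpose (0::nat) c0"
  define g0 where "g0 = (if c0 = 0 then id else R_map k (c0 - 1))"
  have g0G: "g0 \<in> G_OD k"
  proof (cases "c0 = 0")
    case True then show ?thesis unfolding g0_def by (simp add: G_OD.G_id)
  next
    case False
    then have "c0 - 1 < k" using c0k by simp
    from G_OD.G_R[OF G_OD.G_id this] show ?thesis unfolding g0_def using False by simp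
  qed
  define q where "q = \<rho> \<circ> \<tau>"
  have q: "q permutes {..<Suc k}" unfolding q_def \<rho>_def
    using permutes_compose[OF t permutes_swap_id[of 0 "{..<Suc k}" c0]] c0k by simp
  have q0: "q 0 = 0" unfolding q_def \<rho>_def c0_def by simp
  have qnz: "q (Suc j) \<noteq> 0" for j using q0 permutes_inj[OF q] by (metis injD nat.distinct(1))
  define \<pi> where "\<pi> = (\<lambda>j. q (Suc j) - 1)"
  have p: "\<pi> permutes {..<k}" unfolding \<pi>_def by (rule permutes_lower[OF q q0])
  define s where "s = (\<lambda>j. b c0 * b (\<tau> (Suc j)))"
  have sv: "\<forall>j<k. s j \<in> {-1,1}"
  proof (intro allI impI)
    fix j assume "j < k"
    then have "\<tau> (Suc j) < Suc k" using permutes_in_image[OF t, of "Suc j"] by simp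
    then have "b c0 \<in> {-1,1}" "b (\<tau> (Suc j)) \<in> {-1,1}" using b c0k by blast+
    then show "s j \<in> {-1,1}" unfolding s_def by (simp only: pm_mult)
  qed
  obtain gS where gS: "gS \<in> G_OD k"
    and gSe: "\<forall>z. length z = k \<longrightarrow> gS z = map (\<lambda>j. s j * z ! (\<pi> j)) [0..<k]"
    using signed_perm_G[OF p sv] by blast
  define g where "g = gS \<circ> g0"
  have gG: "g \<in> G_OD k" unfolding g_def by (rule G_comp[OF gS g0G])
  have key0: "(1 # z) ! c0 * (1 # z) ! p = (1 # g0 z) ! (\<rho> p)" if z: "pm1row k z" and pk: "p < Suc k" for z p
  proof (cases "c0 = 0")
    case True then show ?thesis unfolding g0_def \<rho>_def by simp
  next
    case False
    then obtain c where c: "c0 = Suc c" by (cases c0) auto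
    have ck: "c < k" using c c0k by simp
    have lz: "length z = k" using z unfolding pm1row_def by simp
    have zc: "z ! c \<in> {-1,1}" using pm1row_nth[OF z ck] by auto
    show ?thesis using KEY[OF lz ck zc pk] c unfolding g0_def \<rho>_def by simp
  qed
  have rowfact: "Y ! i = g (X ! (\<sigma> i))" if i: "i < N" for i
  proof -
    have si: "\<sigma> i < N" using permutes_in_image[OF s] i by simp
    define z where "z = X ! (\<sigma> i)"
    have z: "pm1row k z" unfolding z_def using rx lx si nth_mem by blast
    have lz: "length z = k" using z unfolding pm1row_def by simp
    have y: "pm1row k (Y ! i)" using ry ly i nth_mem by blast
    have ly': "length (Y ! i) = k" using y unfolding pm1row_def by simp
    have Xi: "map ((#) 1) X ! (\<sigma> i) = 1 # z" unfolding z_def using si lx by simp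
    have Yi: "map ((#) 1) Y ! i = 1 # Y ! i" using i ly by simp
    have "map ((#) 1) Y ! i ! 0 = a (\<sigma> i) * map ((#) 1) X ! (\<sigma> i) ! (\<tau> 0) * b (\<tau> 0)"
      using e i by blast
    then have e0: "1 = a (\<sigma> i) * (1 # z) ! c0 * b c0"
      unfolding Xi Yi c0_def by simp
    have av: "a (\<sigma> i) \<in> {-1,1}" using a si by blast
    have xv: "(1 # z) ! c0 \<in> {-1,1}" using pm1_cons_nth[OF z c0k] .
    have bv: "b c0 \<in> {-1,1}" using b c0k by blast
    have ai: "a (\<sigma> i) = (1 # z) ! c0 * b c0" using pm_solve[OF av xv bv e0] .
    have lg0: "length (g0 z) = k" using G_pm1[OF g0G z] unfolding pm1row_def by simp
    have "Y ! i = g z"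
    proof (rule nth_equalityI)
      show "length (Y ! i) = length (g z)"
        using ly' lg0 gSe unfolding g_def by simp
      fix j assume "j < length (Y ! i)"
      then have j: "j < k" using ly' by simp
      have tj: "\<tau> (Suc j) < Suc k" using permutes_in_image[OF t, of "Suc j"] j by simp
      have "map ((#) 1) Y ! i ! Suc j = a (\<sigma> i) * map ((#) 1) X ! (\<sigma> i) ! (\<tau> (Suc j)) * b (\<tau> (Suc j))"
        using e i j by simp
      then have ej: "Y ! i ! j = a (\<sigma> i) * (1 # z) ! (\<tau> (Suc j)) * b (\<tau> (Suc j))"
        unfolding Xi Yi by simp
      have "(1 # z) ! c0 * (1 # z) ! (\<tau> (Suc j)) = (1 # g0 z) ! (q (Suc j))"
        using key0[OF z tj] unfolding q_def by simp
      also have "\<dots> = g0 z ! (\<pi> j)" unfolding \<pi>_def using qnz[of j]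
        by (cases "q (Suc j)") simp_all
      finally have kk: "(1 # z) ! c0 * (1 # z) ! (\<tau> (Suc j)) = g0 z ! (\<pi> j)" .
      have "g z ! j = s j * g0 z ! (\<pi> j)" unfolding g_def using gSe lg0 j by simp
      also have "\<dots> = Y ! i ! j" unfolding ej ai s_def kk[symmetric] by (simp add: ac_simps)
      finally show "Y ! i ! j = g z ! j" by simp
    qed
    then show ?thesis unfolding z_def .
  qed
  have s': "\<sigma> permutes {..<length X}" using s lx by simp
  have "Y = map g (permute_list \<sigma> X)"
  proof (rule nth_equalityI)
    show "length Y = length (map g (permute_list \<sigma> X))" using lx ly by simp
    fix i assume "i < length Y"
    then have i: "i < N" using ly by simp
    show "Y ! i = map g (permute_list \<sigma> X) ! i"
      using rowfact[OF i] permute_list_nth[OF s'] i lx by simp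
  qed
  then have "mset Y = mset (map g X)" using mset_permute_list[OF s'] by (simp add: mset_map)
  then show ?thesis using gG by blast
qed

lemma main:
  assumes "is_OA N k t1 X" and "is_OA N k t2 Y"
  shows "OD_equiv N k X Y \<longleftrightarrow> (\<exists>g\<in>G_OD k. mset X = mset (map g Y))"
proof -
  have lx: "length X = N" and rx: "\<forall>r\<in>set X. pm1row k r"
    using assms(1) unfolding is_OA_def pm1_array_def pm1row_def by auto
  have ly: "length Y = N" and ry: "\<forall>r\<in>set Y. pm1row k r"
    using assms(2) unfolding is_OA_def pm1_array_def pm1row_def by auto
  show ?thesis
  proof
    assume "OD_equiv N k X Y"
    then have "OD_equiv N k Y X" by (rule OD_sym)
    then show "\<exists>g\<in>G_OD k. mset X = mset (map g Y)" using dirA[OF ly lx ry rx] by blast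
  next
    assume "\<exists>g\<in>G_OD k. mset X = mset (map g Y)"
    then obtain g where g: "g \<in> G_OD k" and m: "mset X = mset (map g Y)" by blast
    have 1: "OD_equiv N k Y (map g Y)" using OD_G[OF g ly ry] .
    have 2: "OD_equiv N k (map g Y) X" using OD_mset[OF m] ly by simp
    show "OD_equiv N k X Y" using OD_sym[OF OD_trans[OF 1 2]] .
  qed
qed


theorem lemma5:
  fixes N k t1 t2 :: nat and X Y :: "int list list"
  assumes "is_OA N k t1 X" and "is_OA N k t2 Y"
    and "t1 \<ge> 1" and "t2 \<ge> 1"
  shows "OD_equiv N k X Y \<longleftrightarrow> (\<exists>g\<in>G_OD k. mset X = mset (map g Y))"
  using main[OF assms(1,2)] .

end
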